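(* Let $(A,\leq,\cdot,/)$ be a unital narhoop with distinguished left identity $1$. Then: (1) $1$ is the top element of $(A,\leq)$ if and only if $\sqcap$ is commutative on $A$; (2) the principal ideal $(1]=\{x\in A\mid x\leq 1\}$ is closed under $\cdot$ and $/$ (hence is a subnarhoop), and $((1],\sqcap)$ is a semilattice.
   Context: Write $xy$ for $x\cdot y$; $\cdot$ binds more strongly than $/$, and $/$ binds more strongly than $\sqcap$, where $x\sqcap y := (x/y)y$. A right-residuated magma is a structure $(A,\leq,\cdot,/)$ where $(A,\leq)$ is a poset and $xy\leq z\iff x\leq z/y$ for all $x,y,z\in A$. A narhoop is a right-residuated magma such that for all $x,y$: $x\leq y\iff x\sqcap y = x = y\sqcap x$. A narhoop is unital if $x/x=y/y$ for all $x,y\in A$ (equivalently, $A$ has a left identity element); then $1$ denotes the common value $x/x$, which is a left identity element. A subnarhoop is a subset closed under $\cdot$ and $/$. *)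

theory Defs
  imports Main
begin

text \<open>A structure (A, le, m, r) with carrier the whole type 'a; m is the product x y,
  r is the right residual x / y.\<close>

definition right_residuated_magma ::
  "('a \<Rightarrow> 'a \<Rightarrow> bool) \<Rightarrow> ('a \<Rightarrow> 'a \<Rightarrow> 'a) \<Rightarrow> ('a \<Rightarrow> 'a \<Rightarrow> 'a) \<Rightarrow> bool" where
  "right_residuated_magma le m r \<longleftrightarrow>
     (\<forall>x. le x x) \<and>
     (\<forall>x y z. le x y \<longrightarrow> le y z \<longrightarrow> le x z) \<and>
     (\<forall>x y. le x y \<longrightarrow> le y x \<longrightarrow> x = y) \<and>
     (\<forall>x y z. le (m x y) z \<longleftrightarrow> le x (r z y))"

definition nmeet :: "('a \<Rightarrow> 'a \<Rightarrow> 'a) \<Rightarrow> ('a \<Rightarrow> 'a \<Rightarrow> 'a) \<Rightarrow> 'a \<Rightarrow> 'a \<Rightarrow> 'a" where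
  "nmeet m r x y = m (r x y) y"

definition narhoop ::
  "('a \<Rightarrow> 'a \<Rightarrow> bool) \<Rightarrow> ('a \<Rightarrow> 'a \<Rightarrow> 'a) \<Rightarrow> ('a \<Rightarrow> 'a \<Rightarrow> 'a) \<Rightarrow> bool" where
  "narhoop le m r \<longleftrightarrow> right_residuated_magma le m r \<and>
     (\<forall>x y. le x y \<longleftrightarrow> (nmeet m r x y = x \<and> nmeet m r y x = x))"

definition unital :: "('a \<Rightarrow> 'a \<Rightarrow> 'a) \<Rightarrow> bool" where
  "unital r \<longleftrightarrow> (\<forall>x y. r x x = r y y)"

text \<open>The common value x / x (meaningful when unital).\<close>
definition nunit :: "('a \<Rightarrow> 'a \<Rightarrow> 'a) \<Rightarrow> 'a" where
  "nunit r = r undefined undefined"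

definition semilattice_on :: "'a set \<Rightarrow> ('a \<Rightarrow> 'a \<Rightarrow> 'a) \<Rightarrow> bool" where
  "semilattice_on S f \<longleftrightarrow>
     (\<forall>x\<in>S. \<forall>y\<in>S. f x y \<in> S) \<and>
     (\<forall>x\<in>S. \<forall>y\<in>S. \<forall>z\<in>S. f (f x y) z = f x (f y z)) \<and>
     (\<forall>x\<in>S. \<forall>y\<in>S. f x y = f y x) \<and>
     (\<forall>x\<in>S. f x x = x)"

end

theory Submission
  imports Defs
begin

theorem mainTheorem10:
  fixes le :: "'a \<Rightarrow> 'a \<Rightarrow> bool" and m r :: "'a \<Rightarrow> 'a \<Rightarrow> 'a"
  assumes "narhoop le m r" and "unital r"
  shows "((\<forall>x. le x (nunit r)) \<longleftrightarrow> (\<forall>x y. nmeet m r x y = nmeet m r y x))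
         \<and> (\<forall>x y. le x (nunit r) \<and> le y (nunit r) \<longrightarrow>
           le (m x y) (nunit r) \<and> le (r x y) (nunit r))
         \<and> semilattice_on {x. le x (nunit r)} (nmeet m r)"
proof -
  define u where "u = nunit r"
  have refl: "\<And>x. le x x" and tr: "\<And>x y z. le x y \<Longrightarrow> le y z \<Longrightarrow> le x z"
    and anti: "\<And>x y. le x y \<Longrightarrow> le y x \<Longrightarrow> x = y"
    and res: "\<And>x y z. le (m x y) z \<longleftrightarrow> le x (r z y)"
    and nar: "\<And>x y. le x y \<longleftrightarrow> (nmeet m r x y = x \<and> nmeet m r y x = x)"
    using assms(1) unfolding narhoop_def right_residuated_magma_def by blast+
  have un: "\<And>x. r x x = u" using assms(2) unfolding unital_def u_def nunit_def by metis
  have L1: "\<And>z y. le (m (r z y) y) z" using res refl by blast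
  have mono: "\<And>x x' y. le x x' \<Longrightarrow> le (m x y) (m x' y)"
    using res refl tr by meson
  have rmono: "\<And>z z' y. le z z' \<Longrightarrow> le (r z y) (r z' y)"
    using res L1 tr by meson
  have lb: "\<And>x y. le (nmeet m r x y) x" using L1 unfolding nmeet_def by blast
  have glb: "\<And>x y z. le z x \<Longrightarrow> le z y \<Longrightarrow> le z (nmeet m r x y)"
  proof -
    fix x y z assume a: "le z x" "le z y"
    have "nmeet m r z y = z" using nar a(2) by blast
    moreover have "le (nmeet m r z y) (nmeet m r x y)"
      unfolding nmeet_def by (rule mono, rule rmono, rule a(1))
    ultimately show "le z (nmeet m r x y)" by simp
  qed
  have lb2: "\<And>x y. le (r x y) u \<Longrightarrow> le (nmeet m r x y) y"
    unfolding nmeet_def using res un by metis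
  have ident: "\<And>x. m u x = x" using nar refl un unfolding nmeet_def by metis
  have P1: "(\<forall>x. le x u) \<longleftrightarrow> (\<forall>x y. nmeet m r x y = nmeet m r y x)"
  proof
    assume top: "\<forall>x. le x u"
    show "\<forall>x y. nmeet m r x y = nmeet m r y x"
    proof (intro allI)
      fix x y
      have "le (nmeet m r x y) (nmeet m r y x)"
        using glb lb lb2 top by blast
      moreover have "le (nmeet m r y x) (nmeet m r x y)"
        using glb lb lb2 top by blast
      ultimately show "nmeet m r x y = nmeet m r y x" using anti by blast
    qed
  next
    assume c: "\<forall>x y. nmeet m r x y = nmeet m r y x"
    have q: "\<And>a b. le (r a b) u"
    proof -
      fix a b
      have "le (nmeet m r a b) b" using c lb by metis
      thus "le (r a b) u" using res un unfolding nmeet_def by metis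
    qed
    show "\<forall>x. le x u"
    proof
      fix x
      have "le x (r (m x u) u)" using res refl by blast
      thus "le x u" using q tr by blast
    qed
  qed
  have P2: "\<And>x y. le x u \<Longrightarrow> le y u \<Longrightarrow> le (m x y) u \<and> le (r x y) u"
  proof -
    fix x y assume a: "le x u" "le y u"
    have "le (m x y) (m u y)" using mono a(1) by blast
    hence m1: "le (m x y) u" using ident a(2) tr by metis
    have "le (r x y) (r u y)" using rmono a(1) by blast
    moreover have "nmeet m r u y = y" using nar a(2) by blast
    hence "le (r u y) u" using res un refl unfolding nmeet_def by metis
    ultimately show "le (m x y) u \<and> le (r x y) u" using m1 tr by blast
  qed
  have meet: "\<And>x y z. le x u \<Longrightarrow> le y u \<Longrightarrow>
      le (nmeet m r x y) x \<and> le (nmeet m r x y) y \<and> (le z x \<longrightarrow> le z y \<longrightarrow> le z (nmeet m r x y))"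
    using lb lb2 glb P2 by blast
  have comm: "\<And>x y. le x u \<Longrightarrow> le y u \<Longrightarrow> nmeet m r x y = nmeet m r y x"
  proof -
    fix x y assume a: "le x u" "le y u"
    show "nmeet m r x y = nmeet m r y x"
      by (rule anti) (use meet[OF a(1) a(2)] meet[OF a(2) a(1)] in blast)+
  qed
  have clos: "\<And>x y. le x u \<Longrightarrow> le y u \<Longrightarrow> le (nmeet m r x y) u"
    using meet tr by meson
  have assoc: "\<And>x y z. le x u \<Longrightarrow> le y u \<Longrightarrow> le z u \<Longrightarrow>
     nmeet m r (nmeet m r x y) z = nmeet m r x (nmeet m r y z)"
  proof -
    fix x y z assume a: "le x u" "le y u" "le z u"
    have xy: "le (nmeet m r x y) u" and yz: "le (nmeet m r y z) u" using clos a by blast+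
    have 1: "le (nmeet m r (nmeet m r x y) z) x" "le (nmeet m r (nmeet m r x y) z) y"
         "le (nmeet m r (nmeet m r x y) z) z"
      using meet[OF xy a(3)] meet[OF a(1) a(2)] tr by blast+
    have 2: "le (nmeet m r x (nmeet m r y z)) x" "le (nmeet m r x (nmeet m r y z)) y"
         "le (nmeet m r x (nmeet m r y z)) z"
      using meet[OF a(1) yz] meet[OF a(2) a(3)] tr by blast+
    have "le (nmeet m r (nmeet m r x y) z) (nmeet m r x (nmeet m r y z))"
      using 1 glb by blast
    moreover have "le (nmeet m r x (nmeet m r y z)) (nmeet m r (nmeet m r x y) z)"
      using 2 glb by blast
    ultimately show "nmeet m r (nmeet m r x y) z = nmeet m r x (nmeet m r y z)"
      using anti by blast
  qed
  have idem: "\<And>x. nmeet m r x x = x" using nar refl by blast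
  have P3: "semilattice_on {x. le x u} (nmeet m r)"
    unfolding semilattice_on_def using clos comm assoc idem by auto
  show ?thesis using P1 P2 P3 unfolding u_def by blast
qed

end
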